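(* Let there be $n$ risk-neutral agents with independent private valuations drawn from a common distribution and private signals $s_i$. Consider two mechanisms $\bar M$ and $\bar M'$, each constructed as follows. - Each is built from a family of direct mechanisms $M_1,\dots,M_n$ (respectively $M'_1,\dots,M'_n$). - Each such direct mechanism allocates the good to the highest message. - In the $i$-th mechanism of the family, all agents are subject to agent $i$'s transfer rule and all receive signal $s_i$, and truthful revelation is a symmetric equilibrium. - The mechanism $\bar M$ (respectively $\bar M'$) allocates the good to the highest message, with ties broken arbitrarily, and charges each agent $j$ the transfer function of the $j$-th mechanism of its family. Suppose $\bar M$ and $\bar M'$ implement the same transfer function for agent $i$. Then, in the truthful equilibria of $\bar M$ and $\bar M'$, agent $i$'s expected utility is the same in both mechanisms.
   Context: Truthful revelation means each agent reports his valuation. An agent who receives the good with valuation $v$ and pays $t$ gets $v-t$; otherwise he gets $-t$. *)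

theory Defs
  imports "HOL-Probability.Probability" "HOL-Combinatorics.Transposition"
begin

text \<open>Agents are 0,...,n-1. A (valuation or message) profile is a function nat => real;
  only the entries below n matter. Valuations are i.i.d. with common law D.\<close>

definition profiles :: "nat \<Rightarrow> real measure \<Rightarrow> (nat \<Rightarrow> real) measure" where
  "profiles n D = PiM {..<n} (\<lambda>_. D)"

text \<open>An allocation rule q: q m j is the probability that agent j gets the good at message
  profile m. It allocates to the highest message, ties broken arbitrarily.\<close>

definition highest_alloc :: "nat \<Rightarrow> ((nat \<Rightarrow> real) \<Rightarrow> nat \<Rightarrow> real) \<Rightarrow> bool" where
  "highest_alloc n q \<longleftrightarrow>
     (\<forall>m. (\<forall>j<n. 0 \<le> q m j \<and> ((\<exists>k<n. m j < m k) \<longrightarrow> q m j = 0)) \<and> (\<Sum>j<n. q m j) = 1)"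

definition mech_measurable :: "nat \<Rightarrow> ((nat \<Rightarrow> real) \<Rightarrow> nat \<Rightarrow> real)
    \<Rightarrow> (nat \<Rightarrow> (nat \<Rightarrow> real) \<Rightarrow> real) \<Rightarrow> bool" where
  "mech_measurable n q t \<longleftrightarrow>
     (\<forall>j<n. (\<lambda>m. q m j) \<in> borel_measurable (PiM {..<n} (\<lambda>_. borel))
          \<and> t j \<in> borel_measurable (PiM {..<n} (\<lambda>_. borel)))"

definition util :: "((nat \<Rightarrow> real) \<Rightarrow> nat \<Rightarrow> real) \<Rightarrow> (nat \<Rightarrow> (nat \<Rightarrow> real) \<Rightarrow> real)
    \<Rightarrow> (nat \<Rightarrow> real) \<Rightarrow> (nat \<Rightarrow> real) \<Rightarrow> nat \<Rightarrow> real" where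
  "util q t v m j = v j * q m j - t j m"

text \<open>Truthful reporting is a symmetric strategy profile.\<close>

definition truthful_eq :: "nat \<Rightarrow> real measure \<Rightarrow> ((nat \<Rightarrow> real) \<Rightarrow> nat \<Rightarrow> real)
    \<Rightarrow> (nat \<Rightarrow> (nat \<Rightarrow> real) \<Rightarrow> real) \<Rightarrow> (nat \<Rightarrow> (nat \<Rightarrow> real) \<Rightarrow> 'b::topological_space) \<Rightarrow> bool" where
  "truthful_eq n D q t sig \<longleftrightarrow>
     (\<forall>j<n. \<forall>dev :: real \<Rightarrow> 'b \<Rightarrow> real.
        (\<lambda>(x, y). dev x y) \<in> borel_measurable (borel \<Otimes>\<^sub>M borel) \<longrightarrow>
        (\<integral>v. util q t v (v(j := dev (v j) (sig j v))) j \<partial>profiles n D)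
          \<le> (\<integral>v. util q t v v j \<partial>profiles n D))"

text \<open>The i-th mechanism of a family: every agent j is subject to agent i's transfer rule
  and receives signal s_i, i.e. j is put in the position of agent i.\<close>

definition family_transfer :: "nat \<Rightarrow> (nat \<Rightarrow> (nat \<Rightarrow> real) \<Rightarrow> real) \<Rightarrow> nat \<Rightarrow> (nat \<Rightarrow> real) \<Rightarrow> real" where
  "family_transfer i t j m = t i (m \<circ> Transposition.transpose i j)"

definition family_signal :: "nat \<Rightarrow> (nat \<Rightarrow> (nat \<Rightarrow> real) \<Rightarrow> 'b) \<Rightarrow> nat \<Rightarrow> (nat \<Rightarrow> real) \<Rightarrow> 'b" where
  "family_signal i s j v = s i (v \<circ> Transposition.transpose i j)"

end

theory Submission
  imports Defs
begin

lemma alloc_val: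
  assumes h: "highest_alloc n q" and i: "i < n" and nt: "\<forall>k<n. k \<noteq> i \<longrightarrow> v k \<noteq> v i"
  shows "q v i = (if \<exists>k<n. v i < v k then 0 else 1)"
proof (cases "\<exists>k<n. v i < v k")
  case True
  then show ?thesis using h i unfolding highest_alloc_def by auto
next
  case False
  have lt: "\<forall>k<n. k \<noteq> i \<longrightarrow> v k < v i" using False nt by force
  have z: "\<forall>k\<in>{..<n}-{i}. q v k = 0" using h lt i unfolding highest_alloc_def by auto
  have "1 = (\<Sum>j<n. q v j)" using h unfolding highest_alloc_def by auto
  also have "\<dots> = q v i + (\<Sum>j\<in>{..<n}-{i}. q v j)" using i by (subst sum.remove[of _ i]) auto
  also have "\<dots> = q v i" using z by simp
  finally show ?thesis using False by simp
qed

lemma no_ties_AE: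
  assumes D: "prob_space D" "sets D = sets borel" "\<forall>x. emeasure D {x} = 0"
    and i: "i < n"
  shows "AE v in profiles n D. \<forall>k<n. k \<noteq> i \<longrightarrow> v k \<noteq> v i"
proof -
  interpret product_sigma_finite "\<lambda>_. D"
    unfolding product_sigma_finite_def using D(1) prob_space_imp_sigma_finite by blast
  define I where "I = {..<n} - {i}"
  have ins: "insert i I = {..<n}" using i I_def by auto
  have fI: "finite I" "i \<notin> I" using I_def by auto
  define N where "N = {v \<in> space (PiM {..<n} (\<lambda>_. D)). \<exists>k\<in>I. v k = v i}"
  have mD: "measurable D = measurable borel" "measurable N' D = measurable N' borel" for N'
    using D(2) by (auto intro!: measurable_cong_sets)
  have Nm: "N \<in> sets (PiM {..<n} (\<lambda>_. D))"
    unfolding N_def using i fI(1) I_def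
  proof (intro sets.sets_Collect_finite_Ex ballI measurable_equality_set)
    fix k assume "k \<in> I"
    then have "k \<in> {..<n}" using I_def by auto
    then have "(\<lambda>x. x k) \<in> measurable (PiM {..<n} (\<lambda>_. D)) D" by simp
    then show "(\<lambda>x. x k) \<in> borel_measurable (PiM {..<n} (\<lambda>_. D))" by (metis mD(2))
  next
    have "(\<lambda>x. x i) \<in> measurable (PiM {..<n} (\<lambda>_. D)) D" using i by simp
    then show "(\<lambda>x. x i) \<in> borel_measurable (PiM {..<n} (\<lambda>_. D))" by (metis mD(2))
  qed (use fI in auto)
  have "emeasure (PiM {..<n} (\<lambda>_. D)) N = (\<integral>\<^sup>+ v. indicator N v \<partial>PiM (insert i I) (\<lambda>_. D))"
    using Nm ins by simp
  also have "\<dots> = (\<integral>\<^sup>+ x. (\<integral>\<^sup>+ y. indicator N (x(i := y)) \<partial>D) \<partial>(PiM I (\<lambda>_. D)))"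
    using Nm ins fI by (subst product_nn_integral_insert) auto
  also have "\<dots> = (\<integral>\<^sup>+ x. 0 \<partial>(PiM I (\<lambda>_. D)))"
  proof (rule nn_integral_cong)
    fix x assume x: "x \<in> space (PiM I (\<lambda>_. D))"
    have "(\<integral>\<^sup>+ y. indicator N (x(i := y)) \<partial>D) \<le> (\<integral>\<^sup>+ y. indicator (x ` I) y \<partial>D)"
      using fI(2) by (intro nn_integral_mono) (auto simp: N_def indicator_def split: if_splits)
    also have "\<dots> = emeasure D (x ` I)"
      using fI D(2) by (intro nn_integral_indicator) (auto simp: D(2) intro!: finite_imageI finite_imp_closed borel_closed)
    also have "\<dots> = (\<Sum>y\<in>x ` I. emeasure D {y})"
      using fI D(2) by (intro emeasure_eq_sum_singleton) auto
    also have "\<dots> = 0" using D(3) by simp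
    finally show "(\<integral>\<^sup>+ y. indicator N (x(i := y)) \<partial>D) = 0" by simp
  qed
  also have "\<dots> = 0" by simp
  finally have "N \<in> null_sets (PiM {..<n} (\<lambda>_. D))" using Nm by auto
  then show ?thesis unfolding profiles_def
    by (rule AE_I') (auto simp: N_def I_def)
qed

theorem corollary1:
  fixes n i :: nat and D :: "real measure"
    and t t' :: "nat \<Rightarrow> (nat \<Rightarrow> real) \<Rightarrow> real"
    and s s' :: "nat \<Rightarrow> (nat \<Rightarrow> real) \<Rightarrow> 'b::topological_space"
    and qf qf' :: "nat \<Rightarrow> (nat \<Rightarrow> real) \<Rightarrow> nat \<Rightarrow> real"
    and qb qb' :: "(nat \<Rightarrow> real) \<Rightarrow> nat \<Rightarrow> real"
  assumes D: "prob_space D" "sets D = sets borel" "\<forall>x. emeasure D {x} = 0"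
    and i: "i < n"
    and sig: "\<forall>k<n. s k \<in> borel_measurable (profiles n D) \<and> s' k \<in> borel_measurable (profiles n D)"
    and fam: "\<forall>k<n. highest_alloc n (qf k) \<and> mech_measurable n (qf k) (family_transfer k t)
                   \<and> truthful_eq n D (qf k) (family_transfer k t) (family_signal k s)"
    and fam': "\<forall>k<n. highest_alloc n (qf' k) \<and> mech_measurable n (qf' k) (family_transfer k t')
                   \<and> truthful_eq n D (qf' k) (family_transfer k t') (family_signal k s')"
    and bar: "highest_alloc n qb" "mech_measurable n qb t"
    and bar': "highest_alloc n qb'" "mech_measurable n qb' t'"
    and same: "t i = t' i"
  shows "(\<integral>v. util qb t v v i \<partial>profiles n D) = (\<integral>v. util qb' t' v v i \<partial>profiles n D)"
proof -
  have ms: "measurable (profiles n D) N' = measurable (PiM {..<n} (\<lambda>_. borel)) N'" for N'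
    unfolding profiles_def using D(2)
    by (intro measurable_cong_sets sets_PiM_cong) auto
  have m1: "(\<lambda>v. util qb t v v i) \<in> borel_measurable (profiles n D)"
  proof -
    have a: "(\<lambda>x. qb x i) \<in> borel_measurable (PiM {..<n} (\<lambda>_. borel))" "t i \<in> borel_measurable (PiM {..<n} (\<lambda>_. borel))"
      using bar(2) i unfolding mech_measurable_def by auto
    have c: "(\<lambda>x. x i) \<in> borel_measurable (PiM {..<n} (\<lambda>_. borel))" using i by simp
    show ?thesis unfolding ms util_def using a c by (intro borel_measurable_diff borel_measurable_times) auto
  qed
  have m2: "(\<lambda>v. util qb' t' v v i) \<in> borel_measurable (profiles n D)"
  proof -
    have a: "(\<lambda>x. qb' x i) \<in> borel_measurable (PiM {..<n} (\<lambda>_. borel))" "t' i \<in> borel_measurable (PiM {..<n} (\<lambda>_. borel))"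
      using bar'(2) i unfolding mech_measurable_def by auto
    have c: "(\<lambda>x. x i) \<in> borel_measurable (PiM {..<n} (\<lambda>_. borel))" using i by simp
    show ?thesis unfolding ms util_def using a c by (intro borel_measurable_diff borel_measurable_times) auto
  qed
  show ?thesis
  proof (rule integral_cong_AE[OF m1 m2])
    show "AE v in profiles n D. util qb t v v i = util qb' t' v v i"
      using no_ties_AE[OF D i]
      by eventually_elim (simp add: util_def same alloc_val[OF bar(1) i] alloc_val[OF bar'(1) i])
  qed
qed

end
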